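(* Let $N\ge1$. The closure of $\Phi_N$ in $\mathrm{PSL}_2(\hat{\mathbb{Z}}_{\mathrm{odd}})$ is $\mathrm{PSL}_2(\hat{\mathbb{Z}}_{\mathrm{odd}})$ if $3$ does not divide $N$, and is $\hat D_{\mathrm{odd}}$ if $3$ divides $N$.
   Context: $\bar\Gamma(2)=\Gamma(2)/\{\pm1\}\subset\mathrm{PSL}_2(\mathbb{Z})$, freely generated by the classes $A$ of $\begin{pmatrix}1&2\\0&1\end{pmatrix}$ and $B$ of $\begin{pmatrix}1&0\\2&1\end{pmatrix}$; $\Phi_N$ is the kernel of $\bar\Gamma(2)\to(\mathbb{Z}/N\mathbb{Z})^2$, $A\mapsto(1,0)$, $B\mapsto(0,1)$. Let $\hat{\mathbb{Z}}_{\mathrm{odd}}=\prod_{p\ne2}\mathbb{Z}_p$, with $\mathrm{PSL}_2(\mathbb{Z})\subset\mathrm{PSL}_2(\hat{\mathbb{Z}}_{\mathrm{odd}})$ and the profinite topology. $\hat D_{\mathrm{odd}}$ is the inverse image in $\mathrm{PSL}_2(\hat{\mathbb{Z}}_{\mathrm{odd}})$, under reduction mod $3$, of the Klein four-subgroup $D_3\subset\mathrm{PSL}_2(\mathbb{Z}/3\mathbb{Z})$ consisting of the classes of $\pm I$, $\pm\begin{pmatrix}0&-1\\1&0\end{pmatrix}$, $\pm\begin{pmatrix}-1&1\\1&1\end{pmatrix}$, $\pm\begin{pmatrix}1&1\\1&-1\end{pmatrix}$. *)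

theory Defs
  imports "HOL-Analysis.Analysis"
begin

text \<open>An element of \<open>\<Prod>_{p\<noteq>2} Z_p = lim_{m odd} Z/mZ\<close> is represented as a compatible
  family \<open>x :: nat \<Rightarrow> int\<close> with \<open>x m \<in> {0..<m}\<close> for odd \<open>m\<close> (its residue mod \<open>m\<close>),
  normalised to \<open>0\<close> at even indices.\<close>

type_synonym zo = "nat \<Rightarrow> int"

definition zodd :: "zo set" where
  "zodd = {x. (\<forall>m. (odd m \<longrightarrow> 0 \<le> x m \<and> x m < int m) \<and> (even m \<longrightarrow> x m = 0))
              \<and> (\<forall>m n. odd n \<and> m dvd n \<longrightarrow> x m = x n mod int m)}"

definition zint :: "int \<Rightarrow> zo" where
  "zint k = (\<lambda>m. if odd m then k mod int m else 0)"

definition zadd :: "zo \<Rightarrow> zo \<Rightarrow> zo" where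
  "zadd x y = (\<lambda>m. if odd m then (x m + y m) mod int m else 0)"

definition zsub :: "zo \<Rightarrow> zo \<Rightarrow> zo" where
  "zsub x y = (\<lambda>m. if odd m then (x m - y m) mod int m else 0)"

definition zmul :: "zo \<Rightarrow> zo \<Rightarrow> zo" where
  "zmul x y = (\<lambda>m. if odd m then (x m * y m) mod int m else 0)"

definition zneg :: "zo \<Rightarrow> zo" where
  "zneg x = zsub (zint 0) x"

definition zodd_top :: "zo topology" where
  "zodd_top = subtopology (product_topology (\<lambda>_. discrete_topology UNIV) UNIV) zodd"

text \<open>A 2x2 matrix (a b; c d) is the tuple (a,b,c,d).\<close>
type_synonym zmat = "zo \<times> zo \<times> zo \<times> zo"

definition SL2_odd :: "zmat set" where
  "SL2_odd = {(a,b,c,d). a \<in> zodd \<and> b \<in> zodd \<and> c \<in> zodd \<and> d \<in> zodd \<and>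
                         zsub (zmul a d) (zmul b c) = zint 1}"

definition mneg :: "zmat \<Rightarrow> zmat" where
  "mneg M = (case M of (a,b,c,d) \<Rightarrow> (zneg a, zneg b, zneg c, zneg d))"

definition pcls :: "zmat \<Rightarrow> zmat set" where
  "pcls M = {M, mneg M}"

definition PSL2_odd :: "zmat set set" where
  "PSL2_odd = pcls ` SL2_odd"

definition SL2_top :: "zmat topology" where
  "SL2_top = subtopology
     (prod_topology zodd_top (prod_topology zodd_top (prod_topology zodd_top zodd_top))) SL2_odd"

definition PSL2_top :: "zmat set topology" where
  "PSL2_top = topology (\<lambda>U. U \<subseteq> PSL2_odd \<and> openin SL2_top {M \<in> SL2_odd. pcls M \<in> U})"

type_synonym imat = "int \<times> int \<times> int \<times> int"

definition imul :: "imat \<Rightarrow> imat \<Rightarrow> imat" where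
  "imul M N = (case M of (a,b,c,d) \<Rightarrow> case N of (e,f,g,h) \<Rightarrow>
                 (a*e + b*g, a*f + b*h, c*e + d*g, c*f + d*h))"

definition ineg :: "imat \<Rightarrow> imat" where
  "ineg M = (case M of (a,b,c,d) \<Rightarrow> (-a, -b, -c, -d))"

definition ipcls :: "imat \<Rightarrow> imat set" where
  "ipcls M = {M, ineg M}"

text \<open>Letters: (True, s) is A^{\<plusminus>1}, (False, s) is B^{\<plusminus>1}; s = True means exponent +1.\<close>
definition gen :: "bool \<times> bool \<Rightarrow> imat" where
  "gen l = (case l of
      (True, True) \<Rightarrow> (1, 2, 0, 1)
    | (True, False) \<Rightarrow> (1, -2, 0, 1)
    | (False, True) \<Rightarrow> (1, 0, 2, 1)
    | (False, False) \<Rightarrow> (1, 0, -2, 1))"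

definition eval_word :: "(bool \<times> bool) list \<Rightarrow> imat" where
  "eval_word ws = foldr (\<lambda>l M. imul (gen l) M) ws (1, 0, 0, 1)"

definition expA :: "(bool \<times> bool) list \<Rightarrow> int" where
  "expA ws = sum_list (map (\<lambda>(isA, pos). if isA then (if pos then 1 else -1) else 0) ws)"

definition expB :: "(bool \<times> bool) list \<Rightarrow> int" where
  "expB ws = sum_list (map (\<lambda>(isA, pos). if isA then 0 else (if pos then 1 else -1)) ws)"

definition Gamma2bar :: "imat set set" where
  "Gamma2bar = {ipcls (eval_word ws) | ws. True}"

text \<open>Phi_N = kernel of Gamma(2)-bar \<rightarrow> (Z/N)^2, A \<mapsto> (1,0), B \<mapsto> (0,1); since Gamma(2)-bar is free
  on A, B, this map sends the class of a word to its pair of exponent sums mod N.\<close>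
definition Phi :: "nat \<Rightarrow> imat set set" where
  "Phi N = {ipcls (eval_word ws) | ws. int N dvd expA ws \<and> int N dvd expB ws}"

definition emb :: "imat \<Rightarrow> zmat" where
  "emb M = (case M of (a,b,c,d) \<Rightarrow> (zint a, zint b, zint c, zint d))"

definition psl_embed :: "imat set \<Rightarrow> zmat set" where
  "psl_embed C = emb ` C"

text \<open>D_3 \<subseteq> PSL2(Z/3), listed by representatives with entries in {0,1,2} (both signs).\<close>
definition D3 :: "imat set" where
  "D3 = {(1,0,0,1), (2,0,0,2),
         (0,2,1,0), (0,1,2,0),
         (2,1,1,1), (1,2,2,2),
         (1,1,1,2), (2,2,2,1)}"

definition red3 :: "zmat \<Rightarrow> imat" where
  "red3 M = (case M of (a,b,c,d) \<Rightarrow> (a 3, b 3, c 3, d 3))"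

definition Dhat_odd :: "zmat set set" where
  "Dhat_odd = {P \<in> PSL2_odd. \<exists>M \<in> P. red3 M \<in> D3}"

end

theory Submission
  imports Defs "HOL-Number_Theory.Cong"
begin

definition uu :: "int \<Rightarrow> imat" where "uu x = (1, x, 0, 1)"
definition ll :: "int \<Rightarrow> imat" where "ll x = (1, 0, x, 1)"
definition adj :: "imat \<Rightarrow> imat" where "adj M = (case M of (a,b,c,d) \<Rightarrow> (d, -b, -c, a))"
definition idet :: "imat \<Rightarrow> int" where "idet M = (case M of (a,b,c,d) \<Rightarrow> a*d - b*c)"
definition Id2 :: imat where "Id2 = (1,0,0,1)"

lemma imul_assoc: "imul (imul X Y) Z = imul X (imul Y Z)"
  by (cases X; cases Y; cases Z) (simp add: imul_def algebra_simps)

lemma imul_Id [simp]: "imul Id2 X = X" "imul X Id2 = X"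
  by (cases X, simp add: imul_def Id2_def)+

lemma adj_mul: "adj (imul X Y) = imul (adj Y) (adj X)"
  by (cases X; cases Y) (simp add: imul_def adj_def algebra_simps)

lemma idet_mul: "idet (imul X Y) = idet X * idet Y"
  by (cases X; cases Y) (simp add: imul_def idet_def algebra_simps)

lemma adj_inv: "idet X = 1 \<Longrightarrow> imul (adj X) X = Id2"
  "idet X = 1 \<Longrightarrow> imul X (adj X) = Id2"
  by (cases X, simp add: imul_def adj_def idet_def Id2_def algebra_simps)+

lemma eval_Nil [simp]: "eval_word [] = Id2"
  by (simp add: eval_word_def Id2_def)

lemma eval_Cons [simp]: "eval_word (l # ws) = imul (gen l) (eval_word ws)"
  by (simp add: eval_word_def)

lemma eval_append: "eval_word (ws @ vs) = imul (eval_word ws) (eval_word vs)"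
  by (induction ws) (simp_all add: imul_assoc)

lemma expA_simps [simp]: "expA [] = 0" "expA (l # ws) = (case l of (isA, pos) \<Rightarrow> if isA then (if pos then 1 else -1) else 0) + expA ws"
  by (simp_all add: expA_def)

lemma expB_simps [simp]: "expB [] = 0" "expB (l # ws) = (case l of (isA, pos) \<Rightarrow> if isA then 0 else (if pos then 1 else -1)) + expB ws"
  by (simp_all add: expB_def)

lemma expA_append [simp]: "expA (ws @ vs) = expA ws + expA vs"
  by (simp add: expA_def)
lemma expB_append [simp]: "expB (ws @ vs) = expB ws + expB vs"
  by (simp add: expB_def)

definition invl :: "bool \<times> bool \<Rightarrow> bool \<times> bool" where "invl l = (fst l, \<not> snd l)"
definition invw :: "(bool \<times> bool) list \<Rightarrow> (bool \<times> bool) list" where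
  "invw ws = rev (map invl ws)"

lemma gen_invl: "gen (invl l) = adj (gen l)"
  by (cases l) (auto simp: gen_def invl_def adj_def split: bool.splits)

lemma idet_gen: "idet (gen l) = 1"
  by (cases l) (auto simp: gen_def idet_def split: bool.splits)

lemma idet_eval: "idet (eval_word ws) = 1"
  by (induction ws) (simp_all add: idet_mul idet_gen, simp add: idet_def Id2_def)

lemma adj_Id [simp]: "adj Id2 = Id2" by (simp add: adj_def Id2_def)

lemma eval_invw: "eval_word (invw ws) = adj (eval_word ws)"
  by (induction ws) (simp_all add: invw_def eval_append gen_invl adj_mul)

lemma expA_invw [simp]: "expA (invw ws) = - expA ws"
  by (induction ws) (auto simp: invw_def invl_def)
lemma expB_invw [simp]: "expB (invw ws) = - expB ws"
  by (induction ws) (auto simp: invw_def invl_def)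

definition Apow :: "int \<Rightarrow> (bool \<times> bool) list" where
  "Apow k = (if k \<ge> 0 then replicate (nat k) (True, True) else replicate (nat (-k)) (True, False))"
definition Bpow :: "int \<Rightarrow> (bool \<times> bool) list" where
  "Bpow k = (if k \<ge> 0 then replicate (nat k) (False, True) else replicate (nat (-k)) (False, False))"

lemma eval_rep_AT: "eval_word (replicate n (True,True)) = uu (2 * int n)"
  by (induction n) (simp_all add: uu_def Id2_def gen_def imul_def algebra_simps)
lemma eval_rep_AF: "eval_word (replicate n (True,False)) = uu (- 2 * int n)"
  by (induction n) (simp_all add: uu_def Id2_def gen_def imul_def algebra_simps)
lemma eval_rep_BT: "eval_word (replicate n (False,True)) = ll (2 * int n)"
  by (induction n) (simp_all add: ll_def Id2_def gen_def imul_def algebra_simps)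
lemma eval_rep_BF: "eval_word (replicate n (False,False)) = ll (- 2 * int n)"
  by (induction n) (simp_all add: ll_def Id2_def gen_def imul_def algebra_simps)

lemma eval_Apow: "eval_word (Apow k) = uu (2 * k)"
  by (simp add: Apow_def eval_rep_AT eval_rep_AF)
lemma eval_Bpow: "eval_word (Bpow k) = ll (2 * k)"
  by (simp add: Bpow_def eval_rep_BT eval_rep_BF)

lemma exp_rep: "expA (replicate n (True,b)) = (if b then int n else - int n)"
  "expB (replicate n (True,b)) = 0"
  "expA (replicate n (False,b)) = 0"
  "expB (replicate n (False,b)) = (if b then int n else - int n)"
  by (induction n) auto

lemma exp_Apow [simp]: "expA (Apow k) = k" "expB (Apow k) = 0"
  by (auto simp: Apow_def exp_rep)
lemma exp_Bpow [simp]: "expA (Bpow k) = 0" "expB (Bpow k) = k"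
  by (auto simp: Bpow_def exp_rep)

definition meq :: "int \<Rightarrow> imat \<Rightarrow> imat \<Rightarrow> bool" where
  "meq m X Y = (case X of (a,b,c,d) \<Rightarrow> case Y of (a',b',c',d') \<Rightarrow>
     [a = a'] (mod m) \<and> [b = b'] (mod m) \<and> [c = c'] (mod m) \<and> [d = d'] (mod m))"

lemma meq_refl [simp]: "meq m X X"
  by (cases X) (simp add: meq_def)
lemma meq_sym: "meq m X Y \<Longrightarrow> meq m Y X"
  by (cases X; cases Y) (simp add: meq_def cong_def)
lemma meq_trans: "meq m X Y \<Longrightarrow> meq m Y Z \<Longrightarrow> meq m X Z"
  by (cases X; cases Y; cases Z) (simp add: meq_def cong_def)
lemma meq_mul: "meq m X X' \<Longrightarrow> meq m Y Y' \<Longrightarrow> meq m (imul X Y) (imul X' Y')"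
proof -
  obtain a b c d where X: "X = (a,b,c,d)" by (cases X) auto
  obtain a' b' c' d' where X': "X' = (a',b',c',d')" by (cases X') auto
  obtain e f g h where Y: "Y = (e,f,g,h)" by (cases Y) auto
  obtain e' f' g' h' where Y': "Y' = (e',f',g',h')" by (cases Y') auto
  assume "meq m X X'" "meq m Y Y'"
  then have h: "[a = a'] (mod m)" "[b = b'] (mod m)" "[c = c'] (mod m)" "[d = d'] (mod m)"
    "[e = e'] (mod m)" "[f = f'] (mod m)" "[g = g'] (mod m)" "[h = h'] (mod m)"
    by (simp_all add: X X' Y Y' meq_def)
  show ?thesis unfolding X X' Y Y' imul_def meq_def
    using h by (simp add: cong_add cong_mult)
qed
lemma meq_adj: "meq m X Y \<Longrightarrow> meq m (adj X) (adj Y)"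
  by (cases X; cases Y) (simp add: meq_def adj_def cong_minus_minus_iff)

definition W :: "int \<Rightarrow> imat \<Rightarrow> bool" where
  "W m T = (\<exists>ws. meq m (eval_word ws) T)"
definition R :: "int \<Rightarrow> nat \<Rightarrow> imat \<Rightarrow> bool" where
  "R m N T = (\<exists>ws. int N dvd expA ws \<and> int N dvd expB ws \<and> meq m (eval_word ws) T)"

lemma W_cong: "W m X \<Longrightarrow> meq m X Y \<Longrightarrow> W m Y"
  unfolding W_def using meq_trans by blast
lemma R_cong: "R m N X \<Longrightarrow> meq m X Y \<Longrightarrow> R m N Y"
  unfolding R_def using meq_trans by blast
lemma W_mul: "W m X \<Longrightarrow> W m Y \<Longrightarrow> W m (imul X Y)"
  unfolding W_def by (metis eval_append meq_mul)
lemma R_mul: "R m N X \<Longrightarrow> R m N Y \<Longrightarrow> R m N (imul X Y)"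
  unfolding R_def by (metis eval_append meq_mul expA_append expB_append dvd_add)
lemma R_Id: "R m N Id2"
  unfolding R_def by (rule exI[of _ "[]"]) simp

lemma two_half: assumes "odd (m::int)" shows "2 * (y * ((m+1) div 2)) = y * m + y"
proof -
  have k: "2 * ((m+1) div 2) = m+1" using assms by presburger
  have "2 * (y * ((m+1) div 2)) = y * (2 * ((m+1) div 2))" by simp
  also have "\<dots> = y * m + y" using k by (simp add: algebra_simps)
  finally show ?thesis .
qed

lemma W_uu: assumes "odd m" shows "W m (uu x)"
proof -
  have e: "2 * (x * ((m+1) div 2)) = x * m + x" using two_half[OF assms] .
  show ?thesis unfolding W_def
    apply (rule exI[of _ "Apow (x * ((m+1) div 2))"])
    apply (simp add: eval_Apow meq_def uu_def e cong_def)
    done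
qed

lemma W_ll: assumes "odd m" shows "W m (ll x)"
proof -
  have e: "2 * (x * ((m+1) div 2)) = x * m + x" using two_half[OF assms] .
  show ?thesis unfolding W_def
    apply (rule exI[of _ "Bpow (x * ((m+1) div 2))"])
    apply (simp add: eval_Bpow meq_def ll_def e cong_def)
    done
qed

lemma R_uN: assumes "odd m" shows "R m N (uu (int N * x))"
proof -
  have e: "2 * (int N * x * ((m+1) div 2)) = int N * x * m + int N * x" using two_half[OF assms] .
  show ?thesis unfolding R_def
    apply (rule exI[of _ "Apow (int N * x * ((m+1) div 2))"])
    apply (simp add: eval_Apow meq_def uu_def e cong_def)
    done
qed

lemma R_lN: assumes "odd m" shows "R m N (ll (int N * x))"
proof -
  have e: "2 * (int N * x * ((m+1) div 2)) = int N * x * m + int N * x" using two_half[OF assms] .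
  show ?thesis unfolding R_def
    apply (rule exI[of _ "Bpow (int N * x * ((m+1) div 2))"])
    apply (simp add: eval_Bpow meq_def ll_def e cong_def)
    done
qed

lemma R_conj: assumes "W m T" "R m N Q" shows "R m N (imul (imul T Q) (adj T))"
proof -
  obtain ws where ws: "meq m (eval_word ws) T" using assms(1) W_def by blast
  obtain vs where vs: "int N dvd expA vs" "int N dvd expB vs" "meq m (eval_word vs) Q"
    using assms(2) R_def by blast
  show ?thesis unfolding R_def
    apply (rule exI[of _ "ws @ vs @ invw ws"])
    using vs meq_mul[OF meq_mul[OF ws vs(3)] meq_adj[OF ws]]
    by (simp add: eval_append eval_invw imul_assoc)
qed

lemma R_comm: assumes "W m T" "W m S" shows "R m N (imul (imul (imul T S) (adj T)) (adj S))"
proof -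
  obtain ws where ws: "meq m (eval_word ws) T" using assms(1) W_def by blast
  obtain vs where vs: "meq m (eval_word vs) S" using assms(2) W_def by blast
  show ?thesis unfolding R_def
    apply (rule exI[of _ "ws @ vs @ invw ws @ invw vs"])
    using meq_mul[OF meq_mul[OF meq_mul[OF ws vs] meq_adj[OF ws]] meq_adj[OF vs]]
    by (simp add: eval_append eval_invw imul_assoc)
qed

lemma W_imp_det: assumes "W m T" shows "[idet T = 1] (mod m)"
proof -
  obtain ws where h: "meq m (eval_word ws) T" using assms W_def by blast
  obtain a b c d where E: "eval_word ws = (a,b,c,d)" by (cases "eval_word ws") auto
  obtain a' b' c' d' where T: "T = (a',b',c',d')" by (cases T) auto
  have c: "[a = a'] (mod m)" "[b = b'] (mod m)" "[c = c'] (mod m)" "[d = d'] (mod m)"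
    using h by (simp_all add: E T meq_def)
  have "a*d - b*c = 1" using idet_eval[of ws] by (simp add: E idet_def)
  moreover have "[a*d - b*c = a'*d' - b'*c'] (mod m)"
    by (intro cong_diff cong_mult c)
  ultimately show ?thesis by (simp add: T idet_def cong_sym)
qed

lemma shift_unit:
  fixes a c d m :: int
  assumes m: "m > 0" and d: "[a = 1] (mod d)"
    and nc: "\<And>p. prime p \<Longrightarrow> p dvd m \<Longrightarrow> p dvd a \<Longrightarrow> p dvd c \<Longrightarrow> False"
  shows "\<exists>t. d dvd t \<and> coprime (a + t*c) m"
proof -
  define S where "S = {p \<in> prime_factors m. \<not> p dvd a}"
  define Q where "Q = \<Prod> S"
  define t where "t = d * Q"
  have fin: "finite S" by (simp add: S_def)
  have "coprime (a + t*c) m"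
  proof (rule ccontr)
    assume "\<not> coprime (a+t*c) m"
    then have "\<bar>gcd (a+t*c) m\<bar> \<noteq> 1" by (simp add: coprime_iff_gcd_eq_1)
    then obtain p where p: "prime p" "p dvd gcd (a+t*c) m" by (rule prime_factor_int)
    hence pa: "p dvd a + t*c" and pm: "p dvd m" by auto
    show False
    proof (cases "p dvd a")
      case True
      then have "p dvd (a + t*c) - a" using pa dvd_diff by blast
      then have "p dvd t*c" by simp
      moreover have "\<not> p dvd c" using nc p pm True by blast
      ultimately have "p dvd d * Q" using p by (simp add: t_def prime_dvd_mult_iff)
      hence "p dvd d \<or> p dvd Q" using p by (simp add: prime_dvd_mult_iff)
      then show False
      proof
        assume "p dvd d"
        moreover have "d dvd a - 1" using d by (simp add: cong_iff_dvd_diff cong_sym_eq)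
        ultimately have "p dvd a - 1" by (rule dvd_trans)
        with True have "p dvd a - (a - 1)" using dvd_diff by blast
        then have "p dvd 1" by simp
        with p show False using not_prime_unit by blast
      next
        assume "p dvd Q"
        then obtain q where q: "q \<in> S" "p dvd q" using prime_dvd_prod_iff[OF fin p(1)]
          by (auto simp: Q_def)
        then have "prime q" "\<not> q dvd a" by (auto simp: S_def in_prime_factors_iff)
        then have "p = q" using primes_dvd_imp_eq p q by blast
        with True \<open>\<not> q dvd a\<close> show False by simp
      qed
    next
      case False
      then have "p \<in> S" using p pm m by (simp add: S_def in_prime_factors_iff)
      hence "p dvd Q" unfolding Q_def using dvd_prodI[OF fin, of p id] by simp
      hence "p dvd t*c" by (simp add: t_def)
      hence "p dvd (a + t*c) - t*c" using pa dvd_diff by blast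
      hence "p dvd a" by simp
      with False show False by simp
    qed
  qed
  moreover have "d dvd t" by (simp add: t_def)
  ultimately show ?thesis by blast
qed

lemma decomp:
  fixes P :: "imat \<Rightarrow> bool" and m d a b c e :: int
  assumes m: "m > 0" and dm: "d dvd m" and d0: "d > 0"
  and Pc: "\<And>X Y. P X \<Longrightarrow> meq m X Y \<Longrightarrow> P Y"
  and Pm: "\<And>X Y. P X \<Longrightarrow> P Y \<Longrightarrow> P (imul X Y)"
  and Pu: "\<And>x. P (uu (d*x))" and Pl: "\<And>x. P (ll (d*x))"
  and Pd: "\<And>a \<alpha>. [a = 1] (mod d) \<Longrightarrow> [a*\<alpha> = 1] (mod m) \<Longrightarrow> P (a,0,0,\<alpha>)"
  and T: "[a = 1] (mod d)" "[b = 0] (mod d)" "[c = 0] (mod d)" "[e = 1] (mod d)"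
     "[a*e - b*c = 1] (mod m)"
  shows "P (a,b,c,e)"
proof -
  have nc: False if p: "prime p" "p dvd m" "p dvd a" "p dvd c" for p
  proof -
    have "p dvd a*e - b*c" using p by simp
    moreover have "m dvd a*e - b*c - 1" using T(5) by (simp add: cong_iff_dvd_diff)
    then have "p dvd a*e - b*c - 1" using p(2) dvd_trans by blast
    ultimately have "p dvd (a*e - b*c) - (a*e - b*c - 1)" using dvd_diff by blast
    then have "p dvd 1" by simp
    with p show False using not_prime_unit by blast
  qed
  obtain t where t: "d dvd t" "coprime (a + t*c) m" using shift_unit[OF m T(1)] nc by blast
  define a1 where "a1 = a + t*c"
  define b1 where "b1 = b + t*e"
  obtain \<alpha> where \<alpha>: "[a1 * \<alpha> = 1] (mod m)" using cong_solve_coprime_int t(2) a1_def by blast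
  obtain k where k: "a1 * \<alpha> = 1 + m * k"
    using \<alpha> by (metis cong_iff_dvd_diff dvd_def add.commute diff_eq_eq)
  obtain j where j: "a1 * e - b1 * c = 1 + m * j"
  proof -
    have "a1 * e - b1 * c = a*e - b*c" by (simp add: a1_def b1_def algebra_simps)
    then show ?thesis using T(5) that by (metis cong_iff_dvd_diff dvd_def add.commute diff_eq_eq)
  qed
  define y where "y = c * \<alpha>"
  define z where "z = \<alpha> * b1"
  have P1: "P (uu (-t))"
  proof -
    have "d * (- (t div d)) = - t" using t(1) by simp
    then show ?thesis using Pu[of "- (t div d)"] by metis
  qed
  have dc: "d dvd c" using T(3) by (simp add: cong_0_iff)
  have P2: "P (ll y)"
  proof -
    have "d * (c div d * \<alpha>) = c * \<alpha>" using dc by (metis dvd_mult_div_cancel mult.assoc)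
    then show ?thesis using Pl[of "c div d * \<alpha>"] unfolding y_def by metis
  qed
  have P3: "P (a1,0,0,\<alpha>)"
  proof (rule Pd)
    show "[a1 * \<alpha> = 1] (mod m)" by (rule \<alpha>)
    have "[t*c = 0] (mod d)" using t(1) by (simp add: cong_0_iff)
    then show "[a1 = 1] (mod d)" using cong_add[OF T(1) \<open>[t*c = 0] (mod d)\<close>] by (simp add: a1_def)
  qed
  have db1: "d dvd b1" using T(2) t(1) by (simp add: b1_def cong_0_iff)
  have P4: "P (uu z)"
  proof -
    have "d * (\<alpha> * (b1 div d)) = \<alpha> * b1" using db1 by (metis dvd_mult_div_cancel mult.left_commute)
    then show ?thesis using Pu[of "\<alpha> * (b1 div d)"] unfolding z_def by metis
  qed
  have P5: "P (imul (uu (-t)) (imul (ll y) (imul (a1,0,0,\<alpha>) (uu z))))"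
    using P1 P2 P3 P4 Pm by blast
  have prod: "imul (uu (-t)) (imul (ll y) (imul (a1,0,0,\<alpha>) (uu z))) =
     (a1 - t*y*a1, a1*z - t*(y*a1*z + \<alpha>), y*a1, y*a1*z + \<alpha>)"
    by (simp add: imul_def uu_def ll_def algebra_simps)
  have aa: "a = a1 - t*c" and bb: "b = b1 - t*e" by (simp_all add: a1_def b1_def)
  have k0: "a1*\<alpha> - 1 - m*k = 0" using k by simp
  have j0: "a1*e - b1*c - 1 - m*j = 0" using j by simp
  have e4: "y*a1*z + \<alpha> - e = m * (k*e - \<alpha>*j + c*\<alpha>*b1*k)"
  proof -
    have "y*a1*z + \<alpha> - e - m * (k*e - \<alpha>*j + c*\<alpha>*b1*k) =
      (c*\<alpha>*b1 + e)*(a1*\<alpha> - 1 - m*k) - \<alpha>*(a1*e - b1*c - 1 - m*j)"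
      unfolding y_def z_def by (simp add: algebra_simps)
    then show ?thesis using k0 j0 by simp
  qed
  have e1: "a1 - t*y*a1 - a = m * (- t*c*k)"
  proof -
    have "a1 - t*y*a1 - a - m * (- t*c*k) = - t*c*(a1*\<alpha> - 1 - m*k)"
      unfolding y_def aa by (simp add: algebra_simps)
    then show ?thesis using k0 by simp
  qed
  have e3: "y*a1 - c = m * (c*k)"
  proof -
    have "y*a1 - c - m * (c*k) = c*(a1*\<alpha> - 1 - m*k)"
      unfolding y_def by (simp add: algebra_simps)
    then show ?thesis using k0 by simp
  qed
  have e2: "a1*z - t*(y*a1*z + \<alpha>) - b = m * (k*b1 - t*(k*e - \<alpha>*j + c*\<alpha>*b1*k))"
  proof -
    have "a1*z - t*(y*a1*z + \<alpha>) - b - m * (k*b1 - t*(k*e - \<alpha>*j + c*\<alpha>*b1*k)) =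
       b1*(a1*\<alpha> - 1 - m*k) - t*(y*a1*z + \<alpha> - e - m * (k*e - \<alpha>*j + c*\<alpha>*b1*k))"
      unfolding z_def bb by (simp add: algebra_simps)
    then show ?thesis using k0 e4 by simp
  qed
  have "meq m (imul (uu (-t)) (imul (ll y) (imul (a1,0,0,\<alpha>) (uu z)))) (a,b,c,e)"
    unfolding prod meq_def using e1 e2 e3 e4
    by (simp add: cong_iff_dvd_diff del: mult_minus_right)
  then show ?thesis using P5 Pc by blast
qed

lemma wprod_meq:
  assumes "[a*\<alpha> = 1] (mod m)"
  shows "meq m (imul (imul (uu a) (imul (ll (-\<alpha>)) (uu a))) (imul (uu (-1)) (imul (ll 1) (uu (-1))))) (a,0,0,\<alpha>)"
proof -
  obtain k where k: "a * \<alpha> = 1 + m * k"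
    using assms by (metis cong_iff_dvd_diff dvd_def add.commute diff_eq_eq)
  have p: "imul (imul (uu a) (imul (ll (-\<alpha>)) (uu a))) (imul (uu (-1)) (imul (ll 1) (uu (-1))))
     = (a*(2 - a*\<alpha>), a*\<alpha> - 1, 1 - a*\<alpha>, \<alpha>)"
    by (simp add: imul_def uu_def ll_def algebra_simps)
  have "a*(2 - a*\<alpha>) - a = m * (- a*k)" using k by (simp add: algebra_simps)
  then have d1: "m dvd a*(2 - a*\<alpha>) - a" by (metis dvdI)
  have "a*\<alpha> - 1 = m * k" using k by simp
  then have d2: "m dvd a*\<alpha> - 1" by (metis dvdI)
  have "1 - a*\<alpha> = m * (-k)" using k by simp
  then have d3: "m dvd 1 - a*\<alpha>" by (metis dvdI)
  show ?thesis unfolding p meq_def using d1 d2 d3 by (simp add: cong_iff_dvd_diff)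
qed

lemma diag_from:
  assumes Pc: "\<And>X Y. P X \<Longrightarrow> meq m X Y \<Longrightarrow> P Y"
  and Pm: "\<And>X Y. P X \<Longrightarrow> P Y \<Longrightarrow> P (imul X Y)"
  and Pu: "\<And>x. P (uu x)" and Pl: "\<And>x. P (ll x)"
  and h: "[a*\<alpha> = 1] (mod m)"
  shows "P (a,0,0,\<alpha>)"
  by (rule Pc[OF _ wprod_meq[OF h]]) (intro Pm Pu Pl)

lemma W_all:
  fixes m a b c e :: int
  assumes m: "m > 0" "odd m" and h: "[a*e - b*c = 1] (mod m)"
  shows "W m (a,b,c,e)"
proof -
  have u: "\<And>x. W m (uu (1*x))" and l: "\<And>x. W m (ll (1*x))" using W_uu[OF m(2)] W_ll[OF m(2)] by simp_all
  have d: "W m (a, 0, 0, \<alpha>)" if "[a = 1] (mod 1)" "[a * \<alpha> = 1] (mod m)" for a \<alpha>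
    apply (rule diag_from[where P="W m" and m=m])
    apply (erule (1) W_cong)
    apply (erule (1) W_mul)
    apply (rule W_uu[OF m(2)])
    apply (rule W_ll[OF m(2)])
    apply (rule that(2))
    done
  show ?thesis
    by (rule decomp[where d=1 and m=m, OF m(1) _ _ W_cong W_mul u l d]) (simp_all add: h)
qed

lemma R_u3:
  fixes m :: int
  assumes m: "m > 0" "odd m"
  shows "R m N (uu (3*x))"
proof -
  define \<beta> where "\<beta> = (m+1) div 2"
  have b2: "2*\<beta> = m + 1" using m(2) unfolding \<beta>_def by presburger
  have W1: "W m (2,0,0,\<beta>)" using W_all[OF m, of 2 \<beta> 0 0] b2 by (simp add: cong_def)
  have R1: "R m N (imul (imul (imul (2,0,0,\<beta>) (uu x)) (adj (2,0,0,\<beta>))) (adj (uu x)))"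
    by (rule R_comm[OF W1 W_uu[OF m(2)]])
  have p: "imul (imul (imul (2,0,0,\<beta>) (uu x)) (adj (2,0,0,\<beta>))) (adj (uu x)) = (2*\<beta>, 4*x - 2*\<beta>*x, 0, 2*\<beta>)"
    by (simp add: imul_def uu_def adj_def algebra_simps)
  have "meq m (2*\<beta>, 4*x - 2*\<beta>*x, 0, 2*\<beta>) (uu (3*x))"
    unfolding b2 meq_def uu_def by (simp add: cong_iff_dvd_diff algebra_simps)
  then show ?thesis using R_cong[OF R1[unfolded p]] by blast
qed

lemma R_l3:
  fixes m :: int
  assumes m: "m > 0" "odd m"
  shows "R m N (ll (3*x))"
proof -
  define \<beta> where "\<beta> = (m+1) div 2"
  have b2: "2*\<beta> = m + 1" using m(2) unfolding \<beta>_def by presburger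
  have W1: "W m (\<beta>,0,0,2)" using W_all[OF m, of \<beta> 2 0 0] b2 by (simp add: cong_def algebra_simps)
  have R1: "R m N (imul (imul (imul (\<beta>,0,0,2) (ll x)) (adj (\<beta>,0,0,2))) (adj (ll x)))"
    by (rule R_comm[OF W1 W_ll[OF m(2)]])
  have p: "imul (imul (imul (\<beta>,0,0,2) (ll x)) (adj (\<beta>,0,0,2))) (adj (ll x)) = (2*\<beta>, 0, 4*x - 2*\<beta>*x, 2*\<beta>)"
    by (simp add: imul_def ll_def adj_def algebra_simps)
  have "meq m (2*\<beta>, 0, 4*x - 2*\<beta>*x, 2*\<beta>) (ll (3*x))"
    unfolding b2 meq_def ll_def by (simp add: cong_iff_dvd_diff algebra_simps)
  then show ?thesis using R_cong[OF R1[unfolded p]] by blast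
qed

lemma uu_add: "imul (uu x) (uu y) = uu (x + y)"
  by (simp add: imul_def uu_def)
lemma ll_add: "imul (ll x) (ll y) = ll (x + y)"
  by (simp add: imul_def ll_def)

lemma R_all_coprime:
  fixes m a b c e :: int
  assumes m: "m > 0" "odd m" and N: "\<not> 3 dvd N" and h: "[a*e - b*c = 1] (mod m)"
  shows "R m N (a,b,c,e)"
proof -
  obtain s0 t0 where st: "3 * s0 + int N * t0 = 1"
  proof (cases "N mod 3 = 1")
    case True
    then have "int N = 3 * int (N div 3) + 1" by presburger
    then show ?thesis using that[of "- int (N div 3)" 1] by simp
  next
    case False
    then have "N mod 3 = 2" using N by presburger
    then have "int N = 3 * int (N div 3) + 2" by presburger
    then show ?thesis using that[of "int (N div 3) + 1" "-1"] by simp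
  qed
  have Ru: "R m N (uu x)" for x
  proof -
    have "uu x = imul (uu (3 * (s0*x))) (uu (int N * (t0*x)))"
      unfolding uu_add using st by (metis mult.assoc distrib_right mult_1)
    then show ?thesis using R_mul[OF R_u3[OF m] R_uN[OF m(2)]] by simp
  qed
  have Rl: "R m N (ll x)" for x
  proof -
    have "ll x = imul (ll (3 * (s0*x))) (ll (int N * (t0*x)))"
      unfolding ll_add using st by (metis mult.assoc distrib_right mult_1)
    then show ?thesis using R_mul[OF R_l3[OF m] R_lN[OF m(2)]] by simp
  qed
  have u: "\<And>x. R m N (uu (1*x))" and l: "\<And>x. R m N (ll (1*x))" using Ru Rl by simp_all
  have d: "R m N (a, 0, 0, \<alpha>)" if "[a = 1] (mod 1)" "[a * \<alpha> = 1] (mod m)" for a \<alpha>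
    apply (rule diag_from[where P="R m N" and m=m])
    apply (erule (1) R_cong)
    apply (erule (1) R_mul)
    apply (rule Ru)
    apply (rule Rl)
    apply (rule that(2))
    done
  show ?thesis
    by (rule decomp[where d=1 and m=m, OF m(1) _ _ R_cong R_mul u l d]) (simp_all add: h)
qed

lemma eq_aux_L: "imul (uu p) (imul (imul (imul (uu 1) (ll (-q))) (adj (uu 1))) (ll (-p)))
  = (1 - q - 2*p*q - p*p*q - p*p, q + p*q + p, - q - p*q - p, 1 + q)"
  by (simp add: imul_def uu_def ll_def adj_def algebra_simps)

lemma eq_aux_R: "imul (imul (uu (1+p)) (imul (ll (-(1+q))) (uu (1+p)))) (imul (uu (-1)) (imul (ll 1) (uu (-1))))
  = (1 - q - 2*p*q - p*p*q - p*p, q + p*q + p, - q - p*q - p, 1 + q)"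
  by (simp add: imul_def uu_def ll_def adj_def algebra_simps)

lemma R_diag3:
  fixes m a \<alpha> :: int
  assumes m: "m > 0" "odd m" "3 dvd m" and a1: "[a = 1] (mod 3)" and h: "[a*\<alpha> = 1] (mod m)"
  shows "R m N (a,0,0,\<alpha>)"
proof -
  obtain s0 where s: "a = 1 + 3 * s0" using a1
    by (metis cong_iff_dvd_diff dvd_def add.commute diff_eq_eq)
  have "[a*\<alpha> = 1] (mod 3)" using h m(3) cong_dvd_modulus by blast
  then have "[1*\<alpha> = 1] (mod 3)" using cong_mult[OF cong_sym[OF a1] cong_refl[of \<alpha>]] cong_trans by blast
  then obtain r where r: "\<alpha> = 1 + 3*r"
    by (metis mult_1 cong_iff_dvd_diff dvd_def add.commute diff_eq_eq)
  have C2: "R m N (imul (imul (uu 1) (ll (3*(-r)))) (adj (uu 1)))"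
    by (rule R_conj[OF W_uu[OF m(2)] R_l3[OF m(1,2)]])
  have X: "R m N (imul (uu (3 * s0)) (imul (imul (imul (uu 1) (ll (3*(-r)))) (adj (uu 1))) (ll (3 * (-s0)))))"
    using R_mul[OF R_u3[OF m(1,2)] R_mul[OF C2 R_l3[OF m(1,2)]]] .
  have eq: "imul (uu (3 * s0)) (imul (imul (imul (uu 1) (ll (3*(-r)))) (adj (uu 1))) (ll (3 * (-s0))))
     = imul (imul (uu a) (imul (ll (-\<alpha>)) (uu a))) (imul (uu (-1)) (imul (ll 1) (uu (-1))))"
    using eq_aux_L[of "3 * s0" "3 * r"] eq_aux_R[of "3 * s0" "3 * r"] unfolding s r by simp
  show ?thesis using R_cong[OF X[unfolded eq] wprod_meq[OF h]] .
qed

lemma R_level3: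
  fixes m a b c e :: int
  assumes m: "m > 0" "odd m" "3 dvd m"
  and T: "[a = 1] (mod 3)" "[b = 0] (mod 3)" "[c = 0] (mod 3)" "[e = 1] (mod 3)"
     "[a*e - b*c = 1] (mod m)"
  shows "R m N (a,b,c,e)"
  by (rule decomp[where d=3 and m=m, OF m(1) m(3) _ R_cong R_mul R_u3[OF m(1,2)] R_l3[OF m(1,2)] R_diag3[OF m] T]) simp

definition red3i :: "imat \<Rightarrow> imat" where
  "red3i X = (case X of (a,b,c,d) \<Rightarrow> (a mod 3, b mod 3, c mod 3, d mod 3))"

definition Cls :: "int \<Rightarrow> imat set" where
  "Cls j = (if j = 0 then D3 else if j = 1 then
     {(0, 1, 2, 1), (0, 2, 1, 2), (1, 0, 1, 1), (1, 1, 2, 0), (1, 2, 0, 1), (2, 0, 2, 2), (2, 1, 0, 2), (2, 2, 1, 0)}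
   else {(0, 1, 2, 2), (0, 2, 1, 1), (1, 0, 2, 1), (1, 1, 0, 1), (1, 2, 1, 0), (2, 0, 1, 2), (2, 1, 2, 0), (2, 2, 0, 2)})"

definition dl :: "bool \<times> bool \<Rightarrow> int" where
  "dl l = (case l of (True,True) \<Rightarrow> 1 | (True,False) \<Rightarrow> -1 | (False,True) \<Rightarrow> -1 | (False,False) \<Rightarrow> 1)"

lemma expdiff_Cons: "expA (l#ws) - expB (l#ws) = dl l + (expA ws - expB ws)"
  by (cases l) (auto simp: dl_def split: bool.splits)

lemma lin_mod_l: "(a*b + c*d) mod (n::int) = ((a mod n)*b + (c mod n)*d) mod n"
proof -
  have "[a*b + c*d = (a mod n)*b + (c mod n)*d] (mod n)"
    by (intro cong_add cong_mult cong_refl) (simp_all add: cong_def)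
  then show ?thesis by (simp add: cong_def)
qed
lemma lin_mod_r: "(a*b + c*d) mod (n::int) = (a*(b mod n) + c*(d mod n)) mod n"
proof -
  have "[a*b + c*d = a*(b mod n) + c*(d mod n)] (mod n)"
    by (intro cong_add cong_mult cong_refl) (simp_all add: cong_def)
  then show ?thesis by (simp add: cong_def)
qed

lemma red3i_mul_right: "red3i (imul X Y) = red3i (imul X (red3i Y))"
  by (cases X; cases Y) (simp only: red3i_def imul_def prod.case prod.inject, intro conjI lin_mod_r)

lemma red3i_mul_left: "red3i (imul X Y) = red3i (imul (red3i X) Y)"
  by (cases X; cases Y) (simp only: red3i_def imul_def prod.case prod.inject, intro conjI lin_mod_l)

lemma red3i_ineg: "red3i (ineg X) = red3i (ineg (red3i X))"
  by (cases X) (simp add: red3i_def ineg_def mod_minus_eq)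

lemma step0': "\<forall>X\<in>Cls 0. \<forall>l\<in>{(True,True),(True,False),(False,True),(False,False)}. red3i (imul (gen l) X) \<in> Cls ((0 + dl l) mod 3)"
  unfolding Cls_def D3_def by (simp add: gen_def imul_def red3i_def dl_def)
lemma step0: "X \<in> Cls 0 \<Longrightarrow> red3i (imul (gen l) X) \<in> Cls ((0 + dl l) mod 3)"
proof -
  assume "X \<in> Cls 0"
  moreover have "l \<in> {(True,True),(True,False),(False,True),(False,False)}" by (cases l) auto
  ultimately show ?thesis using step0' by blast
qed
lemma step1': "\<forall>X\<in>Cls 1. \<forall>l\<in>{(True,True),(True,False),(False,True),(False,False)}. red3i (imul (gen l) X) \<in> Cls ((1 + dl l) mod 3)"
  unfolding Cls_def D3_def by (simp add: gen_def imul_def red3i_def dl_def)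
lemma step1: "X \<in> Cls 1 \<Longrightarrow> red3i (imul (gen l) X) \<in> Cls ((1 + dl l) mod 3)"
proof -
  assume "X \<in> Cls 1"
  moreover have "l \<in> {(True,True),(True,False),(False,True),(False,False)}" by (cases l) auto
  ultimately show ?thesis using step1' by blast
qed
lemma step2': "\<forall>X\<in>Cls 2. \<forall>l\<in>{(True,True),(True,False),(False,True),(False,False)}. red3i (imul (gen l) X) \<in> Cls ((2 + dl l) mod 3)"
  unfolding Cls_def D3_def by (simp add: gen_def imul_def red3i_def dl_def)
lemma step2: "X \<in> Cls 2 \<Longrightarrow> red3i (imul (gen l) X) \<in> Cls ((2 + dl l) mod 3)"
proof -
  assume "X \<in> Cls 2"
  moreover have "l \<in> {(True,True),(True,False),(False,True),(False,False)}" by (cases l) auto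
  ultimately show ?thesis using step2' by blast
qed

lemma step: assumes "X \<in> Cls (j mod 3)" shows "red3i (imul (gen l) X) \<in> Cls ((j + dl l) mod 3)"
proof -
  have e: "(j + dl l) mod 3 = (j mod 3 + dl l) mod 3" by (simp add: mod_simps)
  have "j mod 3 = 0 \<or> j mod 3 = 1 \<or> j mod 3 = 2" by presburger
  then consider "j mod 3 = 0" | "j mod 3 = 1" | "j mod 3 = 2" by blast
  then show ?thesis
  proof cases
    case 1 then show ?thesis using assms step0[of X l] e by simp
  next
    case 2 then show ?thesis using assms step1[of X l] e by simp
  next
    case 3 then show ?thesis using assms step2[of X l] e by simp
  qed
qed

lemma eval_cls: "red3i (eval_word ws) \<in> Cls ((expA ws - expB ws) mod 3)"
proof (induction ws)
  case Nil
  then show ?case by (simp add: Cls_def D3_def red3i_def Id2_def)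
next
  case (Cons l ws)
  have h1: "red3i (imul (gen l) (red3i (eval_word ws))) \<in> Cls ((expA ws - expB ws + dl l) mod 3)"
    by (rule step) (rule Cons.IH)
  have h2: "red3i (eval_word (l # ws)) = red3i (imul (gen l) (red3i (eval_word ws)))"
    unfolding eval_Cons by (rule red3i_mul_right)
  have h3: "expA (l#ws) - expB (l#ws) = expA ws - expB ws + dl l"
    using expdiff_Cons[of l ws] by simp
  show ?case by (simp only: h2 h3) (rule h1)
qed

lemma eval_D3: assumes "3 dvd expA ws" "3 dvd expB ws" shows "red3i (eval_word ws) \<in> D3"
proof -
  have "(expA ws - expB ws) mod 3 = 0" using assms by presburger
  then show ?thesis using eval_cls[of ws] by (simp add: Cls_def)
qed

lemma D3_ineg0: "\<forall>v\<in>D3. red3i (ineg v) \<in> D3"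
  by (simp add: D3_def red3i_def ineg_def)

lemma D3_ineg: assumes "red3i X \<in> D3" shows "red3i (ineg X) \<in> D3"
  using D3_ineg0 assms red3i_ineg[of X] by metis


definition q1 :: "(bool \<times> bool) list" where "q1 = [(True,True),(False,True),(True,False),(False,False)]"
definition q2 :: "(bool \<times> bool) list" where "q2 = [(True,True)] @ q1 @ [(True,False)]"
definition q3 :: "(bool \<times> bool) list" where "q3 = q1 @ q2"

lemma eval_q: "eval_word q1 = (21, -8, 8, -3)" "eval_word q2 = (37, -88, 8, -19)"
  "eval_word q3 = (713, -1696, 272, -647)"
  by (simp_all add: q1_def q2_def q3_def gen_def imul_def Id2_def)

lemma exp_q: "expA q1 = 0" "expB q1 = 0" "expA q2 = 0" "expB q2 = 0" "expA q3 = 0" "expB q3 = 0"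
  by (simp_all add: q1_def q2_def q3_def)

lemma reps0: "\<forall>v\<in>D3. \<exists>ws\<in>{[],q1,q2,q3}. red3i (imul v (adj (eval_word ws))) = (1,0,0,1) \<or>
    red3i (imul (ineg v) (adj (eval_word ws))) = (1,0,0,1)"
  unfolding D3_def by (simp add: eval_q Id2_def red3i_def imul_def adj_def ineg_def)

lemma R_from_rep:
  fixes m :: int
  assumes m: "m > 0" "odd m" "3 dvd m" and d: "[idet T = 1] (mod m)"
    and ws: "ws \<in> {[],q1,q2,q3}" and r: "red3i (imul T (adj (eval_word ws))) = (1,0,0,1)"
  shows "R m N T"
proof -
  define Q where "Q = eval_word ws"
  obtain x1 x2 x3 x4 where X: "imul T (adj Q) = (x1,x2,x3,x4)" by (cases "imul T (adj Q)") auto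
  have c: "[x1 = 1] (mod 3)" "[x2 = 0] (mod 3)" "[x3 = 0] (mod 3)" "[x4 = 1] (mod 3)"
    using r unfolding Q_def[symmetric] X by (simp_all add: red3i_def cong_def)
  have dQ: "idet Q = 1" by (simp add: Q_def idet_eval)
  have "idet (adj Q) = 1" using dQ by (cases Q) (simp add: idet_def adj_def algebra_simps)
  then have "idet (imul T (adj Q)) = idet T" by (simp add: idet_mul)
  then have dX: "[x1*x4 - x2*x3 = 1] (mod m)" using d X by (simp add: idet_def)
  have RX: "R m N (x1,x2,x3,x4)" by (rule R_level3[OF m c dX])
  have RQ: "R m N Q" unfolding R_def Q_def
    by (rule exI[of _ ws]) (use ws exp_q in auto)
  have "imul (imul T (adj Q)) Q = T" using adj_inv(1)[OF dQ] by (simp add: imul_assoc)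
  then show ?thesis using R_mul[OF RX RQ] X by simp
qed

lemma alg3:
  fixes m a b c e :: int
  assumes m: "m > 0" "odd m" "3 dvd m" and d: "[a*e - b*c = 1] (mod m)"
    and v: "red3i (a,b,c,e) \<in> D3"
  shows "\<exists>ws. int N dvd expA ws \<and> int N dvd expB ws \<and>
     (meq m (eval_word ws) (a,b,c,e) \<or> meq m (eval_word ws) (ineg (a,b,c,e)))"
proof -
  define T where "T = (a,b,c,e)"
  have dT: "[idet T = 1] (mod m)" using d by (simp add: T_def idet_def)
  have dT': "[idet (ineg T) = 1] (mod m)" using d by (simp add: T_def idet_def ineg_def)
  obtain ws where ws: "ws \<in> {[],q1,q2,q3}" and
    h: "red3i (imul (red3i T) (adj (eval_word ws))) = (1,0,0,1) \<or>
        red3i (imul (ineg (red3i T)) (adj (eval_word ws))) = (1,0,0,1)"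
    using reps0 v unfolding T_def by blast
  have e1: "red3i (imul (red3i T) Y) = red3i (imul T Y)" for Y by (rule red3i_mul_left[symmetric])
  have e2: "red3i (imul (ineg (red3i T)) Y) = red3i (imul (ineg T) Y)" for Y
    by (metis red3i_mul_left red3i_ineg)
  from h have "R m N T \<or> R m N (ineg T)"
    unfolding e1 e2 using R_from_rep[OF m dT ws] R_from_rep[OF m dT' ws] by blast
  then show ?thesis unfolding R_def T_def by blast
qed

lemma alg_coprime:
  fixes m a b c e :: int
  assumes m: "m > 0" "odd m" and N: "\<not> 3 dvd N" and d: "[a*e - b*c = 1] (mod m)"
  shows "\<exists>ws. int N dvd expA ws \<and> int N dvd expB ws \<and> meq m (eval_word ws) (a,b,c,e)"
  using R_all_coprime[OF m N d] unfolding R_def by blast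

definition agree :: "nat \<Rightarrow> zmat \<Rightarrow> zmat \<Rightarrow> bool" where
  "agree n M M' = (case M of (a,b,c,d) \<Rightarrow> case M' of (a',b',c',d') \<Rightarrow>
     a n = a' n \<and> b n = b' n \<and> c n = c' n \<and> d n = d' n)"

lemma agree_sym: "agree n M M' \<Longrightarrow> agree n M' M"
  by (cases M; cases M') (auto simp: agree_def)

lemma zodd_compat: "x \<in> zodd \<Longrightarrow> odd n \<Longrightarrow> k dvd n \<Longrightarrow> x k = x n mod int k"
  by (simp add: zodd_def)

lemma zodd_range: "x \<in> zodd \<Longrightarrow> odd n \<Longrightarrow> 0 \<le> x n \<and> x n < int n"
  by (simp add: zodd_def)

lemma zodd_even: "x \<in> zodd \<Longrightarrow> even n \<Longrightarrow> x n = 0"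
  by (simp add: zodd_def)

lemma SL2_odd_entries: "(a,b,c,d) \<in> SL2_odd \<Longrightarrow> a \<in> zodd \<and> b \<in> zodd \<and> c \<in> zodd \<and> d \<in> zodd"
  by (simp add: SL2_odd_def)

lemma agree_dvd:
  assumes "M \<in> SL2_odd" "M' \<in> SL2_odd" "odd n" "k dvd n" "agree n M M'"
  shows "agree k M M'"
  using assms by (cases M; cases M') (auto simp: agree_def SL2_odd_def zodd_compat[of _ n k])

section \<open>Topology basics\<close>

lemma topspace_zodd_top: "topspace zodd_top = zodd"
  by (simp add: zodd_top_def)

lemma SL2_sub: "SL2_odd \<subseteq> zodd \<times> zodd \<times> zodd \<times> zodd"
  by (auto simp: SL2_odd_def)

lemma topspace_SL2_top: "topspace SL2_top = SL2_odd"
  using SL2_sub by (auto simp: SL2_top_def topspace_zodd_top)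

lemma PSL2_istop: "istopology (\<lambda>U. U \<subseteq> PSL2_odd \<and> openin SL2_top {M \<in> SL2_odd. pcls M \<in> U})"
proof -
  have i: "\<And>S T. {M \<in> SL2_odd. pcls M \<in> S \<inter> T} = {M \<in> SL2_odd. pcls M \<in> S} \<inter> {M \<in> SL2_odd. pcls M \<in> T}"
    by auto
  have u: "\<And>K. {M \<in> SL2_odd. pcls M \<in> \<Union>K} = \<Union>((\<lambda>U. {M \<in> SL2_odd. pcls M \<in> U}) ` K)"
    by auto
  show ?thesis unfolding istopology_def i u
    by (auto intro!: openin_Int openin_Union)
qed

lemma openin_PSL2: "openin PSL2_top U \<longleftrightarrow> U \<subseteq> PSL2_odd \<and> openin SL2_top {M \<in> SL2_odd. pcls M \<in> U}"
  unfolding PSL2_top_def using PSL2_istop by simp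

lemma topspace_PSL2: "topspace PSL2_top = PSL2_odd"
proof -
  have "openin PSL2_top PSL2_odd"
  proof -
    have "{M \<in> SL2_odd. pcls M \<in> PSL2_odd} = topspace SL2_top"
      by (auto simp: topspace_SL2_top PSL2_odd_def)
    then show ?thesis unfolding openin_PSL2 by simp
  qed
  then have "PSL2_odd \<subseteq> topspace PSL2_top" by (rule openin_subset)
  moreover have "topspace PSL2_top \<subseteq> PSL2_odd" using openin_topspace[of PSL2_top] unfolding openin_PSL2 by blast
  ultimately show ?thesis by blast
qed

lemma nbhd_zodd:
  assumes Wo: "openin zodd_top Wo" and x0: "x0 \<in> Wo"
  shows "\<exists>n. odd n \<and> (\<forall>x\<in>zodd. x n = x0 n \<longrightarrow> x \<in> Wo)"
proof -
  obtain T where T: "openin (product_topology (\<lambda>_. discrete_topology (UNIV::int set)) UNIV) T"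
    and WT: "Wo = T \<inter> zodd"
    using Wo unfolding zodd_top_def openin_subtopology by blast
  have x0T: "x0 \<in> T" and x0z: "x0 \<in> zodd" using x0 WT by auto
  obtain U where fin: "finite {i \<in> UNIV. U i \<noteq> topspace (discrete_topology (UNIV::int set))}"
    and x0U: "x0 \<in> Pi\<^sub>E UNIV U" and UT: "Pi\<^sub>E UNIV U \<subseteq> T"
    using T x0T unfolding openin_product_topology_alt by blast
  define K where "K = {i. U i \<noteq> UNIV}"
  have finK: "finite K" using fin by (simp add: K_def)
  define n where "n = \<Prod>{i \<in> K. odd i}"
  have finK': "finite {i \<in> K. odd i}" using finK by simp
  have oddn: "odd n" unfolding n_def using even_prod_iff[OF finK', of id] by auto
  have "x \<in> Wo" if x: "x \<in> zodd" "x n = x0 n" for x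
  proof -
    have "x i \<in> U i" for i
    proof (cases "i \<in> K")
      case False then show ?thesis by (simp add: K_def)
    next
      case True
      show ?thesis
      proof (cases "odd i")
        case True
        then have "i \<in> {i \<in> K. odd i}" using \<open>i \<in> K\<close> by simp
        then have "i dvd n" unfolding n_def using dvd_prodI[OF finK', of i "\<lambda>x. x"] by simp
        then have "x i = x0 i" using zodd_compat[OF x(1) oddn \<open>i dvd n\<close>] zodd_compat[OF x0z oddn \<open>i dvd n\<close>] x(2) by simp
        then show ?thesis using x0U by (auto simp: PiE_iff)
      next
        case False
        then have "x i = x0 i" using zodd_even[OF x(1)] zodd_even[OF x0z] by simp
        then show ?thesis using x0U by (auto simp: PiE_iff)
      qed
    qed
    then have "x \<in> Pi\<^sub>E UNIV U" by (simp add: PiE_iff)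
    then show ?thesis using UT WT x(1) by auto
  qed
  then show ?thesis using oddn by blast
qed

lemma nbhd_SL2:
  assumes V: "openin SL2_top V" and M0: "M0 \<in> V"
  shows "\<exists>n. odd n \<and> (\<forall>M\<in>SL2_odd. agree n M M0 \<longrightarrow> M \<in> V)"
proof -
  obtain T where T: "openin (prod_topology zodd_top (prod_topology zodd_top (prod_topology zodd_top zodd_top))) T"
    and VT: "V = T \<inter> SL2_odd"
    using V unfolding SL2_top_def openin_subtopology by blast
  obtain a b c d where M0e: "M0 = (a,b,c,d)" by (cases M0) auto
  have M0T: "(a,b,c,d) \<in> T" and M0S: "(a,b,c,d) \<in> SL2_odd" using M0 VT M0e by auto
  obtain U1 V1 where U1: "openin zodd_top U1" and V1: "openin (prod_topology zodd_top (prod_topology zodd_top zodd_top)) V1"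
    and aU1: "a \<in> U1" and bV1: "(b,c,d) \<in> V1" and UV1: "U1 \<times> V1 \<subseteq> T"
    using openin_prod_topology_alt[THEN iffD1, rule_format, OF T M0T] by (elim exE conjE)
  obtain U2 V2 where U2: "openin zodd_top U2" and V2: "openin (prod_topology zodd_top zodd_top) V2"
    and bU2: "b \<in> U2" and cV2: "(c,d) \<in> V2" and UV2: "U2 \<times> V2 \<subseteq> V1"
    using openin_prod_topology_alt[THEN iffD1, rule_format, OF V1 bV1] by (elim exE conjE)
  obtain U3 U4 where U3: "openin zodd_top U3" and U4: "openin zodd_top U4"
    and cU3: "c \<in> U3" and dU4: "d \<in> U4" and UV3: "U3 \<times> U4 \<subseteq> V2"
    using openin_prod_topology_alt[THEN iffD1, rule_format, OF V2 cV2] by (elim exE conjE)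
  obtain n1 where n1: "odd n1" "\<forall>x\<in>zodd. x n1 = a n1 \<longrightarrow> x \<in> U1" using nbhd_zodd[OF U1 aU1] by blast
  obtain n2 where n2: "odd n2" "\<forall>x\<in>zodd. x n2 = b n2 \<longrightarrow> x \<in> U2" using nbhd_zodd[OF U2 bU2] by blast
  obtain n3 where n3: "odd n3" "\<forall>x\<in>zodd. x n3 = c n3 \<longrightarrow> x \<in> U3" using nbhd_zodd[OF U3 cU3] by blast
  obtain n4 where n4: "odd n4" "\<forall>x\<in>zodd. x n4 = d n4 \<longrightarrow> x \<in> U4" using nbhd_zodd[OF U4 dU4] by blast
  define n where "n = n1 * n2 * n3 * n4"
  have oddn: "odd n" using n1 n2 n3 n4 by (simp add: n_def)
  have "M \<in> V" if M: "M \<in> SL2_odd" "agree n M M0" for M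
  proof -
    have "agree n1 M M0" by (rule agree_dvd[OF M(1) _ oddn _ M(2)]) (use M0 VT n_def in auto)
    moreover have "agree n2 M M0" by (rule agree_dvd[OF M(1) _ oddn _ M(2)]) (use M0 VT n_def in auto)
    moreover have "agree n3 M M0" by (rule agree_dvd[OF M(1) _ oddn _ M(2)]) (use M0 VT n_def in auto)
    moreover have "agree n4 M M0" by (rule agree_dvd[OF M(1) _ oddn _ M(2)]) (use M0 VT n_def in auto)
    moreover obtain a' b' c' d' where Me: "M = (a',b',c',d')" by (cases M) auto
    ultimately have "a' \<in> U1" "b' \<in> U2" "c' \<in> U3" "d' \<in> U4"
      using n1 n2 n3 n4 M(1) SL2_odd_entries[of a' b' c' d'] by (auto simp: agree_def M0e Me)
    then have "M \<in> T" using UV1 UV2 UV3 Me by blast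
    then show ?thesis using VT M by blast
  qed
  then show ?thesis using oddn by blast
qed

lemma cyl_zodd: "openin zodd_top {x \<in> zodd. x n = v}"
proof -
  have "openin (product_topology (\<lambda>_. discrete_topology (UNIV::int set)) UNIV)
          {x \<in> topspace (product_topology (\<lambda>_. discrete_topology (UNIV::int set)) UNIV). x n \<in> {v}}"
    by (rule openin_continuous_map_preimage[OF continuous_map_product_projection]) auto
  then have "openin (product_topology (\<lambda>_. discrete_topology (UNIV::int set)) UNIV) {x. x n = v}"
    by simp
  then show ?thesis unfolding zodd_top_def openin_subtopology by blast
qed

lemma cyl_open: "openin SL2_top {M \<in> SL2_odd. agree n M M0}"
proof -
  obtain a b c d where M0e: "M0 = (a,b,c,d)" by (cases M0) auto
  define C where "C = (\<lambda>v. {x \<in> zodd. x n = v})"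
  have o: "openin zodd_top (C v)" for v unfolding C_def by (rule cyl_zodd)
  have "openin (prod_topology zodd_top (prod_topology zodd_top (prod_topology zodd_top zodd_top)))
     (C (a n) \<times> C (b n) \<times> C (c n) \<times> C (d n))"
    using o by (simp add: openin_prod_Times_iff)
  moreover have "{M \<in> SL2_odd. agree n M M0} = (C (a n) \<times> C (b n) \<times> C (c n) \<times> C (d n)) \<inter> SL2_odd"
    by (auto simp: C_def agree_def M0e SL2_odd_def)
  ultimately show ?thesis unfolding SL2_top_def openin_subtopology by blast
qed

lemma zneg_at: "odd n \<Longrightarrow> zneg x n = (- x n) mod int n"
  by (simp add: zneg_def zsub_def zint_def)

lemma zneg_even: "even n \<Longrightarrow> zneg x n = 0"
  by (simp add: zneg_def zsub_def)

lemma zneg_zodd: assumes x: "x \<in> zodd" shows "zneg x \<in> zodd"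
  unfolding zodd_def
proof (intro CollectI conjI allI impI)
  fix m :: nat assume "odd m"
  then have "m > 0" by (rule odd_pos)
  then show "0 \<le> zneg x m" "zneg x m < int m" using \<open>odd m\<close> by (simp_all add: zneg_at)
next
  fix m :: nat assume "even m" then show "zneg x m = 0" by (rule zneg_even)
next
  fix m n :: nat assume h: "odd n \<and> m dvd n"
  then have om: "odd m" using dvd_trans by blast
  have "zneg x m = (- x m) mod int m" using om by (rule zneg_at)
  also have "\<dots> = (- (x n mod int m)) mod int m" using zodd_compat[OF x, of n m] h by simp
  also have "\<dots> = (- x n) mod int m" by (simp add: mod_minus_eq)
  also have "\<dots> = ((- x n) mod int n) mod int m" using h by (simp add: mod_mod_cancel)
  also have "\<dots> = zneg x n mod int m" using h by (simp add: zneg_at)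
  finally show "zneg x m = zneg x n mod int m" .
qed

lemma zneg_zneg: assumes x: "x \<in> zodd" shows "zneg (zneg x) = x"
proof
  fix m :: nat
  show "zneg (zneg x) m = x m"
  proof (cases "odd m")
    case True
    have r: "0 \<le> x m \<and> x m < int m" using zodd_range[OF x True] .
    have "zneg (zneg x) m = (- ((- x m) mod int m)) mod int m" using True by (simp add: zneg_at)
    also have "\<dots> = x m mod int m" by (simp add: mod_minus_eq)
    also have "\<dots> = x m" using r by simp
    finally show ?thesis .
  next
    case False then show ?thesis using zneg_even zodd_even[OF x] by simp
  qed
qed

lemma negneg_mod: "((- x) mod m * ((- y) mod m)) mod m = (x * y) mod (m::int)"
  by (metis mod_mult_eq minus_mult_minus)

lemma det_neg: "zsub (zmul (zneg a) (zneg d)) (zmul (zneg b) (zneg c)) = zsub (zmul a d) (zmul b c)"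
proof
  fix m :: nat
  show "zsub (zmul (zneg a) (zneg d)) (zmul (zneg b) (zneg c)) m = zsub (zmul a d) (zmul b c) m"
  proof (cases "odd m")
    case True
    then show ?thesis by (simp add: zsub_def zmul_def zneg_at negneg_mod)
  next
    case False then show ?thesis by (simp add: zsub_def)
  qed
qed

lemma mneg_SL2: "M \<in> SL2_odd \<Longrightarrow> mneg M \<in> SL2_odd"
  by (cases M) (simp add: SL2_odd_def mneg_def zneg_zodd det_neg)

lemma mneg_mneg: "M \<in> SL2_odd \<Longrightarrow> mneg (mneg M) = M"
  by (cases M) (simp add: SL2_odd_def mneg_def zneg_zneg)

lemma pcls_mneg: "M \<in> SL2_odd \<Longrightarrow> pcls (mneg M) = pcls M"
  by (auto simp: pcls_def mneg_mneg)

lemma pcls_eq: "pcls X = pcls Y \<Longrightarrow> X = Y \<or> X = mneg Y"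
  unfolding pcls_def by blast

lemma agree_mneg: "odd n \<Longrightarrow> agree n X Y \<Longrightarrow> agree n (mneg X) (mneg Y)"
  by (cases X; cases Y) (simp add: agree_def mneg_def zneg_at)

lemma PSL2_elem: "P \<in> PSL2_odd \<Longrightarrow> M \<in> P \<Longrightarrow> M \<in> SL2_odd \<and> P = pcls M"
  unfolding PSL2_odd_def
proof (elim imageE)
  fix X assume X: "X \<in> SL2_odd" "P = pcls X" and M: "M \<in> P"
  then have "M = X \<or> M = mneg X" by (simp add: pcls_def)
  then show "M \<in> SL2_odd \<and> P = pcls M"
  proof
    assume "M = X" then show ?thesis using X by simp
  next
    assume "M = mneg X" then show ?thesis using X mneg_SL2[of X] pcls_mneg[of X] by simp
  qed
qed

lemma agree_refl: "agree n M M"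
  by (cases M) (simp add: agree_def)

lemma closure_char:
  assumes S: "S \<subseteq> PSL2_odd"
  shows "P \<in> PSL2_top closure_of S \<longleftrightarrow>
     P \<in> PSL2_odd \<and> (\<forall>n. odd n \<longrightarrow> (\<exists>M\<in>P. \<exists>Q\<in>S. \<exists>M'\<in>Q. agree n M M'))"
proof
  assume P: "P \<in> PSL2_top closure_of S"
  then have PP: "P \<in> PSL2_odd" and op: "\<And>T. P \<in> T \<Longrightarrow> openin PSL2_top T \<Longrightarrow> \<exists>y\<in>S. y \<in> T"
    unfolding closure_of_def topspace_PSL2 by blast+
  obtain M0 where M0: "M0 \<in> SL2_odd" "P = pcls M0" using PP by (auto simp: PSL2_odd_def)
  have "\<exists>M\<in>P. \<exists>Q\<in>S. \<exists>M'\<in>Q. agree n M M'" if n: "odd n" for n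
  proof -
    define C where "C = {M \<in> SL2_odd. agree n M M0} \<union> {M \<in> SL2_odd. agree n M (mneg M0)}"
    have Copen: "openin SL2_top C" unfolding C_def by (intro openin_Un cyl_open)
    have CS: "C \<subseteq> SL2_odd" by (auto simp: C_def)
    have pre: "{M \<in> SL2_odd. pcls M \<in> pcls ` C} = C"
    proof
      show "C \<subseteq> {M \<in> SL2_odd. pcls M \<in> pcls ` C}" using CS by auto
      show "{M \<in> SL2_odd. pcls M \<in> pcls ` C} \<subseteq> C"
      proof
        fix M assume "M \<in> {M \<in> SL2_odd. pcls M \<in> pcls ` C}"
        then obtain M' where M: "M \<in> SL2_odd" "M' \<in> C" "pcls M = pcls M'" by auto
        from pcls_eq[OF M(3)] show "M \<in> C"
        proof
          assume "M = M'" then show ?thesis using M by simp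
        next
          assume e: "M = mneg M'"
          from M(2) have "agree n M' M0 \<or> agree n M' (mneg M0)" unfolding C_def by auto
          then have "agree n M (mneg M0) \<or> agree n M (mneg (mneg M0))"
            using agree_mneg[OF n] e by blast
          then show "M \<in> C" using M(1) mneg_mneg[OF M0(1)] unfolding C_def by auto
        qed
      qed
    qed
    have "openin PSL2_top (pcls ` C)" unfolding openin_PSL2 pre
      using Copen CS by (auto simp: PSL2_odd_def)
    moreover have "P \<in> pcls ` C" using M0 by (auto simp: C_def agree_refl)
    ultimately obtain Q where Q: "Q \<in> S" "Q \<in> pcls ` C" using op by blast
    then obtain M' where M': "M' \<in> C" "Q = pcls M'" by auto
    have "M' \<in> Q" by (simp add: M' pcls_def)
    from M'(1) have "agree n M' M0 \<or> agree n M' (mneg M0)" by (auto simp: C_def)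
    moreover have "M0 \<in> P" "mneg M0 \<in> P" by (simp_all add: M0 pcls_def)
    ultimately show ?thesis using Q(1) \<open>M' \<in> Q\<close> agree_sym by blast
  qed
  then show "P \<in> PSL2_odd \<and> (\<forall>n. odd n \<longrightarrow> (\<exists>M\<in>P. \<exists>Q\<in>S. \<exists>M'\<in>Q. agree n M M'))"
    using PP by blast
next
  assume h: "P \<in> PSL2_odd \<and> (\<forall>n. odd n \<longrightarrow> (\<exists>M\<in>P. \<exists>Q\<in>S. \<exists>M'\<in>Q. agree n M M'))"
  have "\<exists>y\<in>S. y \<in> U" if U: "P \<in> U" "openin PSL2_top U" for U
  proof -
    obtain M0 where M0: "M0 \<in> SL2_odd" "P = pcls M0" using h by (auto simp: PSL2_odd_def)
    define V where "V = {M \<in> SL2_odd. pcls M \<in> U}"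
    have Vo: "openin SL2_top V" using U by (simp add: openin_PSL2 V_def)
    have M0V: "M0 \<in> V" using M0 U V_def by simp
    have M0V': "mneg M0 \<in> V" using M0 U V_def mneg_SL2 pcls_mneg by simp
    obtain n1 where n1: "odd n1" "\<forall>M\<in>SL2_odd. agree n1 M M0 \<longrightarrow> M \<in> V"
      using nbhd_SL2[OF Vo M0V] by blast
    obtain n2 where n2: "odd n2" "\<forall>M\<in>SL2_odd. agree n2 M (mneg M0) \<longrightarrow> M \<in> V"
      using nbhd_SL2[OF Vo M0V'] by blast
    define n where "n = n1 * n2"
    have oddn: "odd n" using n1 n2 by (simp add: n_def)
    obtain M Q M' where MQ: "M \<in> P" "Q \<in> S" "M' \<in> Q" "agree n M M'" using h oddn by blast
    have M'S: "M' \<in> SL2_odd" and Qe: "Q = pcls M'" using PSL2_elem[of Q M'] S MQ by blast+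
    have "M = M0 \<or> M = mneg M0" using MQ(1) M0 by (simp add: pcls_def)
    then have "M' \<in> V"
    proof
      assume e: "M = M0"
      have "agree n1 M' M0"
        by (rule agree_dvd[OF M'S M0(1) oddn _ agree_sym[OF MQ(4)[unfolded e]]]) (simp add: n_def)
      then show ?thesis using n1 M'S by blast
    next
      assume e: "M = mneg M0"
      have "agree n2 M' (mneg M0)"
        by (rule agree_dvd[OF M'S mneg_SL2[OF M0(1)] oddn _ agree_sym[OF MQ(4)[unfolded e]]]) (simp add: n_def)
      then show ?thesis using n2 M'S by blast
    qed
    then have "Q \<in> U" using V_def Qe by simp
    then show ?thesis using MQ(2) by blast
  qed
  then show "P \<in> PSL2_top closure_of S"
    unfolding closure_of_def topspace_PSL2 using h by blast
qed

section \<open>Embedding\<close>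

lemma zint_zodd: "zint k \<in> zodd"
  unfolding zodd_def
proof (intro CollectI conjI allI impI)
  fix m :: nat assume "odd m"
  then have "m > 0" by (rule odd_pos)
  then show "0 \<le> zint k m" "zint k m < int m" using \<open>odd m\<close> by (simp_all add: zint_def)
next
  fix m :: nat assume "even m" then show "zint k m = 0" by (simp add: zint_def)
next
  fix m n :: nat assume h: "odd n \<and> m dvd n"
  then have om: "odd m" using dvd_trans by blast
  show "zint k m = zint k n mod int m" using h om by (simp add: zint_def mod_mod_cancel)
qed

lemma zint_neg: "zint (- k) = zneg (zint k)"
proof
  fix m :: nat show "zint (- k) m = zneg (zint k) m"
    by (cases "odd m") (simp_all add: zint_def zneg_at zneg_even mod_minus_eq)
qed

lemma emb_ineg: "emb (ineg E) = mneg (emb E)"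
  by (cases E) (simp add: emb_def ineg_def mneg_def zint_neg)

lemma psl_embed_ipcls: "psl_embed (ipcls E) = pcls (emb E)"
  by (simp add: psl_embed_def ipcls_def pcls_def emb_ineg)

lemma det_zint: "zsub (zmul (zint a) (zint d)) (zmul (zint b) (zint c)) = zint (a*d - b*c)"
proof
  fix m :: nat
  show "zsub (zmul (zint a) (zint d)) (zmul (zint b) (zint c)) m = zint (a*d - b*c) m"
  proof (cases "odd m")
    case True then show ?thesis by (simp add: zsub_def zmul_def zint_def mod_mult_eq mod_diff_eq)
  next
    case False then show ?thesis by (simp add: zsub_def zint_def)
  qed
qed

lemma emb_SL2: "idet E = 1 \<Longrightarrow> emb E \<in> SL2_odd"
  by (cases E) (simp add: emb_def SL2_odd_def zint_zodd det_zint idet_def)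

lemma S_sub: "psl_embed ` Phi N \<subseteq> PSL2_odd"
  by (auto simp: Phi_def psl_embed_ipcls PSL2_odd_def intro!: imageI emb_SL2 idet_eval)

lemma det_at:
  assumes "(a,b,c,d) \<in> SL2_odd" "odd n"
  shows "[a n * d n - b n * c n = 1] (mod int n)"
proof -
  have "zsub (zmul a d) (zmul b c) n = zint 1 n" using assms(1) by (simp add: SL2_odd_def)
  then have "((a n * d n) mod int n - (b n * c n) mod int n) mod int n = 1 mod int n"
    using assms(2) by (simp add: zsub_def zmul_def zint_def)
  then show ?thesis by (simp add: cong_def mod_diff_eq)
qed

lemma agree_emb:
  assumes M: "(a,b,c,d) \<in> SL2_odd" and n: "odd n" and k: "k dvd n"
    and h: "meq (int n) E (a n, b n, c n, d n)"
  shows "agree k (a,b,c,d) (emb E)"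
proof -
  obtain e1 e2 e3 e4 where E: "E = (e1,e2,e3,e4)" by (cases E) auto
  have ok: "odd k" using n k dvd_trans by blast
  have kn: "int k dvd int n" using k by simp
  have z: "a \<in> zodd" "b \<in> zodd" "c \<in> zodd" "d \<in> zodd" using M by (simp_all add: SL2_odd_def)
  have "e1 mod int k = a n mod int k" "e2 mod int k = b n mod int k"
       "e3 mod int k = c n mod int k" "e4 mod int k = d n mod int k"
    using h cong_dvd_modulus[OF _ kn] by (simp_all add: E meq_def cong_def[symmetric])
  then show ?thesis using ok zodd_compat[OF z(1) n k] zodd_compat[OF z(2) n k]
      zodd_compat[OF z(3) n k] zodd_compat[OF z(4) n k]
    by (simp add: agree_def emb_def E zint_def)
qed

lemma cong_neg_swap: "[x = - y] (mod m) \<Longrightarrow> [- x = (y::int)] (mod m)"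
  by (metis cong_minus_minus_iff minus_minus)

lemma agree_emb_neg:
  assumes M: "(a,b,c,d) \<in> SL2_odd" and n: "odd n" and k: "k dvd n"
    and h: "meq (int n) E (ineg (a n, b n, c n, d n))"
  shows "agree k (mneg (a,b,c,d)) (emb E)"
proof -
  have "agree k (mneg (a,b,c,d)) (mneg (emb (ineg E)))"
  proof -
    have h': "meq (int n) (ineg E) (a n, b n, c n, d n)"
      using h by (cases E) (simp add: meq_def ineg_def cong_neg_swap)
    show ?thesis using agree_mneg[OF _ agree_emb[OF M n k h']] n k dvd_trans by blast
  qed
  moreover have "mneg (emb (ineg E)) = emb E"
  proof -
    have "idet (ineg E) = idet E" by (cases E) (simp add: idet_def ineg_def)
    have "ineg (ineg E) = E" by (cases E) (simp add: ineg_def)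
    then have "emb E = emb (ineg (ineg E))" by simp
    also have "\<dots> = mneg (emb (ineg E))" by (rule emb_ineg)
    finally show ?thesis by simp
  qed
  ultimately show ?thesis by simp
qed

lemma red3_emb: "red3 (emb E) = red3i E"
  by (cases E) (simp add: red3_def emb_def red3i_def zint_def)

theorem proposition14:
  fixes N :: nat
  assumes "N \<ge> 1"
  shows "PSL2_top closure_of (psl_embed ` Phi N) =
           (if 3 dvd N then Dhat_odd else PSL2_odd)"
proof -
  let ?S = "psl_embed ` Phi N"
  have Sel: "Q \<in> ?S \<longleftrightarrow> (\<exists>ws. int N dvd expA ws \<and> int N dvd expB ws \<and> Q = pcls (emb (eval_word ws)))" for Q
  proof
    assume "Q \<in> ?S" then show "\<exists>ws. int N dvd expA ws \<and> int N dvd expB ws \<and> Q = pcls (emb (eval_word ws))"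
      by (auto simp: Phi_def psl_embed_ipcls)
  next
    assume "\<exists>ws. int N dvd expA ws \<and> int N dvd expB ws \<and> Q = pcls (emb (eval_word ws))"
    then obtain ws where ws: "int N dvd expA ws" "int N dvd expB ws" "Q = pcls (emb (eval_word ws))" by blast
    then have "ipcls (eval_word ws) \<in> Phi N" by (auto simp: Phi_def)
    moreover have "Q = psl_embed (ipcls (eval_word ws))" using ws(3) by (simp add: psl_embed_ipcls)
    ultimately show "Q \<in> ?S" by blast
  qed
  have odd_int: "odd (int n)" if "odd n" for n :: nat using that by simp
  show ?thesis
  proof (cases "3 dvd N")
    case False
    have "P \<in> PSL2_top closure_of ?S" if P: "P \<in> PSL2_odd" for P
    proof -
      obtain M0 where M0: "M0 \<in> SL2_odd" "P = pcls M0" using P by (auto simp: PSL2_odd_def)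
      obtain a b c d where M0e: "M0 = (a,b,c,d)" by (cases M0) auto
      have MS: "(a,b,c,d) \<in> SL2_odd" using M0 M0e by simp
      have "\<exists>M\<in>P. \<exists>Q\<in>?S. \<exists>M'\<in>Q. agree n M M'" if n: "odd n" for n
      proof -
        have np: "int n > 0" using n odd_pos by auto
        obtain ws where ws: "int N dvd expA ws" "int N dvd expB ws"
          "meq (int n) (eval_word ws) (a n, b n, c n, d n)"
          using alg_coprime[OF np odd_int[OF n] False det_at[OF MS n]] by blast
        have "agree n (a,b,c,d) (emb (eval_word ws))" by (rule agree_emb[OF MS n dvd_refl ws(3)])
        moreover have "M0 \<in> P" using M0 by (simp add: pcls_def)
        moreover have "pcls (emb (eval_word ws)) \<in> ?S" using ws Sel by blast
        moreover have "emb (eval_word ws) \<in> pcls (emb (eval_word ws))" by (simp add: pcls_def)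
        ultimately show ?thesis using M0e by blast
      qed
      then show ?thesis using closure_char[OF S_sub] P by blast
    qed
    moreover have "PSL2_top closure_of ?S \<subseteq> PSL2_odd"
      using closure_of_subset_topspace[of PSL2_top ?S] topspace_PSL2 by simp
    ultimately show ?thesis using False by auto
  next
    case True
    have sub: "PSL2_top closure_of ?S \<subseteq> Dhat_odd"
    proof
      fix P assume "P \<in> PSL2_top closure_of ?S"
      then have P: "P \<in> PSL2_odd" and h: "\<exists>M\<in>P. \<exists>Q\<in>?S. \<exists>M'\<in>Q. agree 3 M M'"
        using closure_char[OF S_sub] by auto
      then obtain M Q M' where MQ: "M \<in> P" "Q \<in> ?S" "M' \<in> Q" "agree 3 M M'" by blast
      obtain ws where ws: "int N dvd expA ws" "int N dvd expB ws" "Q = pcls (emb (eval_word ws))"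
        using MQ(2) Sel by blast
      have N3: "3 dvd int N" using True by presburger
      have d3: "red3i (eval_word ws) \<in> D3"
        by (rule eval_D3) (use ws N3 dvd_trans in blast)+
      have e: "red3 M = red3 M'" using MQ(4) by (cases M; cases M') (simp add: agree_def red3_def)
      have "M' = emb (eval_word ws) \<or> M' = emb (ineg (eval_word ws))"
        using MQ(3) ws(3) by (simp add: pcls_def emb_ineg)
      then have "red3 M' \<in> D3" using d3 D3_ineg[OF d3] red3_emb[of "eval_word ws"] red3_emb[of "ineg (eval_word ws)"] by auto
      then have "red3 M \<in> D3" using e by simp
      then show "P \<in> Dhat_odd" using P MQ(1) unfolding Dhat_odd_def by blast
    qed
    have sup: "Dhat_odd \<subseteq> PSL2_top closure_of ?S"
    proof
      fix P assume "P \<in> Dhat_odd"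
      then obtain M where P: "P \<in> PSL2_odd" "M \<in> P" "red3 M \<in> D3" by (auto simp: Dhat_odd_def)
      have MS0: "M \<in> SL2_odd" and Pe: "P = pcls M" using PSL2_elem P by blast+
      obtain a b c d where Me: "M = (a,b,c,d)" by (cases M) auto
      have MS: "(a,b,c,d) \<in> SL2_odd" using MS0 Me by simp
      have z: "a \<in> zodd" "b \<in> zodd" "c \<in> zodd" "d \<in> zodd" using MS by (simp_all add: SL2_odd_def)
      have "\<exists>M\<in>P. \<exists>Q\<in>?S. \<exists>M'\<in>Q. agree n M M'" if n: "odd n" for n
      proof -
        define n' where "n' = 3 * n"
        have n'1: "odd n'" using n by (simp add: n'_def)
        have n'2: "int n' > 0" using n'1 odd_pos by auto
        have n'4: "3 dvd int n'" by (simp add: n'_def)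
        have d3n: "(3::nat) dvd n'" by (simp add: n'_def)
        have ndn: "n dvd n'" by (simp add: n'_def)
        have "red3i (a n', b n', c n', d n') = red3 M"
          using zodd_compat[OF z(1) n'1 d3n] zodd_compat[OF z(2) n'1 d3n]
            zodd_compat[OF z(3) n'1 d3n] zodd_compat[OF z(4) n'1 d3n]
          by (simp add: red3i_def red3_def Me)
        then have red: "red3i (a n', b n', c n', d n') \<in> D3" using P(3) by simp
        obtain ws where ws: "int N dvd expA ws" "int N dvd expB ws"
          "meq (int n') (eval_word ws) (a n', b n', c n', d n') \<or>
           meq (int n') (eval_word ws) (ineg (a n', b n', c n', d n'))"
          using alg3[OF n'2 odd_int[OF n'1] n'4 det_at[OF MS n'1] red] by blast
        have Qin: "pcls (emb (eval_word ws)) \<in> ?S" using ws Sel by blast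
        have Ein: "emb (eval_word ws) \<in> pcls (emb (eval_word ws))" by (simp add: pcls_def)
        from ws(3) show ?thesis
        proof
          assume "meq (int n') (eval_word ws) (a n', b n', c n', d n')"
          then have "agree n M (emb (eval_word ws))" using agree_emb[OF MS n'1 ndn] Me by simp
          then show ?thesis using P(2) Qin Ein by blast
        next
          assume "meq (int n') (eval_word ws) (ineg (a n', b n', c n', d n'))"
          then have "agree n (mneg M) (emb (eval_word ws))" using agree_emb_neg[OF MS n'1 ndn] Me by simp
          moreover have "mneg M \<in> P" using Pe by (simp add: pcls_def)
          ultimately show ?thesis using Qin Ein by blast
        qed
      qed
      then show "P \<in> PSL2_top closure_of ?S" using closure_char[OF S_sub] P(1) by blast
    qed
    show ?thesis using True sub sup by auto
  qed
qed

end
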